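(* Let $g=v+h$ be an s-warped spacetime whose Weyl tensor is $W=\rho(3S+G)$ with $S=U\otimes U-*U\otimes *U$, where $U$ is the time-like unitary 2-form with $U^2=v$, and suppose the Ricci tensor has the form $R=A+\mu h$ with $A$ symmetric and $A\cdot h=0$. Then $$B\equiv R-S[R]-\tfrac12\mathrm r\,g=\beta\,\Pi,\qquad \Pi\equiv v-h,\qquad \beta\equiv\tfrac12\mathrm r-2\mu .$$ Consequently $\mu=\frac14\mathrm r-\frac12\beta$, with $\beta=0$ if $B=0$ and, if $B\neq0$, $\beta=\frac{\epsilon}{2}\sqrt{\operatorname{tr}B^2}$ where $\epsilon=-B(x,x)/|B(x,x)|$ for any unit time-like vector $x$.
   Context: $(M,g)$ is an oriented 4-dimensional spacetime of signature $(-,+,+,+)$, volume element $\eta$, Ricci tensor $R$, scalar curvature $\mathrm r=\operatorname{tr}R$. s-warped: locally $g=v+e^{2\lambda}\hat h$ on a product of a 2-dimensional Lorentzian factor (metric $v$) and a 2-dimensional Riemannian factor (metric $\hat h$), $\lambda$ a function on the Lorentzian factor; $h=e^{2\lambda}\hat h$; $v$ and $h$ are viewed as the orthogonal projectors onto the time-like plane V and space-like plane H. Notation: $(A\cdot B)^\alpha{}_\beta=A^\alpha{}_\mu B^\mu{}_\beta$, $A^2=A\cdot A$, $\operatorname{tr}A=A^\alpha{}_\alpha$, $A(x,x)=A_{\alpha\beta}x^\alpha x^\beta$; $*U=\eta(U)$, $( *U)_{\alpha\beta}=\frac12\eta_{\alpha\beta}{}^{\mu\nu}U_{\mu\nu}$;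 $(U\otimes U)_{\alpha\beta\mu\nu}=U_{\alpha\beta}U_{\mu\nu}$; $(A\wedge B)_{\alpha\beta\mu\nu}=A_{\alpha\mu}B_{\beta\nu}+A_{\beta\nu}B_{\alpha\mu}-A_{\alpha\nu}B_{\beta\mu}-A_{\beta\mu}B_{\alpha\nu}$, $G=\frac12g\wedge g$; for a double 2-form $P$ and symmetric 2-tensor $B$, $P[B]_{\alpha\beta}=P_\alpha{}^\mu{}_\beta{}^\nu B_{\mu\nu}$; for double 2-forms $\operatorname{tr}$ is not used here, $\operatorname{tr}B^2=B^\alpha{}_\mu B^\mu{}_\alpha$. A unit time-like vector satisfies $x^2=-1$. *)

theory Defs
  imports "HOL-Analysis.Analysis"
begin

text \<open>A point of a coordinate chart is a vector
  p :: real^4 (coordinates x^0..x^3, x^0 time-like side); indices run over the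
  4-element type 4. Tensor fields carry all indices lowered:
  a 2-tensor field is T p a b, a 4-tensor field is P p a b c d.\<close>

type_synonym pt = "real^4"
type_synonym tens2 = "4 \<Rightarrow> 4 \<Rightarrow> real"
type_synonym tens4 = "4 \<Rightarrow> 4 \<Rightarrow> 4 \<Rightarrow> 4 \<Rightarrow> real"

definition pd :: "(pt \<Rightarrow> real) \<Rightarrow> 4 \<Rightarrow> pt \<Rightarrow> real" where
  "pd f k p = deriv (\<lambda>t. f (p + t *\<^sub>R axis k 1)) 0"

primrec pds :: "(pt \<Rightarrow> real) \<Rightarrow> 4 list \<Rightarrow> pt \<Rightarrow> real" where
  "pds f [] = f"
| "pds f (k # ks) = pd (pds f ks) k"

definition smooth_on :: "pt set \<Rightarrow> (pt \<Rightarrow> real) \<Rightarrow> bool" where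
  "smooth_on \<Omega> f \<longleftrightarrow> (\<forall>ks. pds f ks differentiable_on \<Omega>)"

definition gmat :: "(pt \<Rightarrow> tens2) \<Rightarrow> pt \<Rightarrow> real^4^4" where
  "gmat g p = (\<chi> i j. g p i j)"

definition ginv :: "(pt \<Rightarrow> tens2) \<Rightarrow> pt \<Rightarrow> tens2" where
  "ginv g p i j = matrix_inv (gmat g p) $ i $ j"

text \<open>s-warped spacetime in adapted coordinates (x^0,x^1) on the Lorentzian factor
  and (x^2,x^3) on the Riemannian factor: g = v + e^(2 lambda) hhat.\<close>
definition s_warped :: "pt set \<Rightarrow> (pt \<Rightarrow> tens2) \<Rightarrow> bool" where
  "s_warped \<Omega> g \<longleftrightarrow> open \<Omega> \<and> (\<forall>i j. smooth_on \<Omega> (\<lambda>q. g q i j)) \<and>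
    (\<exists>(lam :: real \<Rightarrow> real \<Rightarrow> real) (vv :: real \<Rightarrow> real \<Rightarrow> tens2) (hh :: real \<Rightarrow> real \<Rightarrow> tens2).
      \<forall>p\<in>\<Omega>.
        (\<forall>i j. g p i j =
            (if i \<in> {0,1} \<and> j \<in> {0,1} then vv (p$0) (p$1) i j
             else if i \<in> {2,3} \<and> j \<in> {2,3} then exp (2 * lam (p$0) (p$1)) * hh (p$2) (p$3) i j
             else 0)) \<and>
        vv (p$0) (p$1) 0 1 = vv (p$0) (p$1) 1 0 \<and>
        vv (p$0) (p$1) 0 0 * vv (p$0) (p$1) 1 1 - vv (p$0) (p$1) 0 1 * vv (p$0) (p$1) 1 0 < 0 \<and>
        hh (p$2) (p$3) 2 3 = hh (p$2) (p$3) 3 2 \<and>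
        hh (p$2) (p$3) 2 2 > 0 \<and>
        hh (p$2) (p$3) 2 2 * hh (p$2) (p$3) 3 3 - hh (p$2) (p$3) 2 3 * hh (p$2) (p$3) 3 2 > 0)"

text \<open>v and h (indices lowered): the metric restricted to the time-like plane V
  and the space-like plane H.\<close>
definition vpart :: "(pt \<Rightarrow> tens2) \<Rightarrow> pt \<Rightarrow> tens2" where
  "vpart g p a b = (if a \<in> {0,1} \<and> b \<in> {0,1} then g p a b else 0)"

definition hpart :: "(pt \<Rightarrow> tens2) \<Rightarrow> pt \<Rightarrow> tens2" where
  "hpart g p a b = (if a \<in> {2,3} \<and> b \<in> {2,3} then g p a b else 0)"

section \<open>Curvature (convention: Ricci_bd = R^a_bad, sphere has positive curvature)\<close>

definition christoffel :: "(pt \<Rightarrow> tens2) \<Rightarrow> pt \<Rightarrow> 4 \<Rightarrow> 4 \<Rightarrow> 4 \<Rightarrow> real" where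
  "christoffel g p a b c = 1/2 * (\<Sum>d\<in>UNIV. ginv g p a d *
     (pd (\<lambda>q. g q d c) b p + pd (\<lambda>q. g q d b) c p - pd (\<lambda>q. g q b c) d p))"

definition riemann_up :: "(pt \<Rightarrow> tens2) \<Rightarrow> pt \<Rightarrow> tens4" where
  "riemann_up g p a b c d =
     pd (\<lambda>q. christoffel g q a d b) c p - pd (\<lambda>q. christoffel g q a c b) d p +
     (\<Sum>e\<in>UNIV. christoffel g p a c e * christoffel g p e d b
                - christoffel g p a d e * christoffel g p e c b)"

definition riemann :: "(pt \<Rightarrow> tens2) \<Rightarrow> pt \<Rightarrow> tens4" where
  "riemann g p a b c d = (\<Sum>e\<in>UNIV. g p a e * riemann_up g p e b c d)"

definition ricci :: "(pt \<Rightarrow> tens2) \<Rightarrow> pt \<Rightarrow> tens2" where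
  "ricci g p b d = (\<Sum>a\<in>UNIV. riemann_up g p a b a d)"

definition scal :: "(pt \<Rightarrow> tens2) \<Rightarrow> pt \<Rightarrow> real" where
  "scal g p = (\<Sum>a\<in>UNIV. \<Sum>b\<in>UNIV. ginv g p a b * ricci g p a b)"

definition kn :: "tens2 \<Rightarrow> tens2 \<Rightarrow> tens4" where
  "kn A B a b m n = A a m * B b n + A b n * B a m - A a n * B b m - A b m * B a n"

definition Gt :: "(pt \<Rightarrow> tens2) \<Rightarrow> pt \<Rightarrow> tens4" where
  "Gt g p = (\<lambda>a b c d. 1/2 * kn (g p) (g p) a b c d)"

definition weyl :: "(pt \<Rightarrow> tens2) \<Rightarrow> pt \<Rightarrow> tens4" where
  "weyl g p a b c d = riemann g p a b c d - 1/2 * kn (ricci g p) (g p) a b c d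
     + scal g p / 6 * Gt g p a b c d"

definition idx4 :: "4 \<Rightarrow> 4 \<Rightarrow> 4 \<Rightarrow> 4 \<Rightarrow> 4 \<Rightarrow> 4" where
  "idx4 a b c d r = (if r = 0 then a else if r = 1 then b else if r = 2 then c else d)"

text \<open>Levi-Civita symbol: determinant of the matrix with rows e_a, e_b, e_c, e_d.\<close>
definition levi :: "4 \<Rightarrow> 4 \<Rightarrow> 4 \<Rightarrow> 4 \<Rightarrow> real" where
  "levi a b c d = det (\<chi> r. axis (idx4 a b c d r) (1::real) :: real^4^4)"

text \<open>Volume element; orient = 1 or -1 fixes the orientation.\<close>
definition eta :: "(pt \<Rightarrow> tens2) \<Rightarrow> real \<Rightarrow> pt \<Rightarrow> tens4" where
  "eta g orient p a b c d = orient * sqrt \<bar>det (gmat g p)\<bar> * levi a b c d"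

definition hodge :: "(pt \<Rightarrow> tens2) \<Rightarrow> real \<Rightarrow> pt \<Rightarrow> tens2 \<Rightarrow> tens2" where
  "hodge g orient p U a b = 1/2 * (\<Sum>c\<in>UNIV. \<Sum>d\<in>UNIV. \<Sum>e\<in>UNIV. \<Sum>f\<in>UNIV.
       eta g orient p a b e f * ginv g p e c * ginv g p f d * U c d)"

definition Stens :: "(pt \<Rightarrow> tens2) \<Rightarrow> real \<Rightarrow> pt \<Rightarrow> tens2 \<Rightarrow> tens4" where
  "Stens g orient p U a b c d =
     U a b * U c d - hodge g orient p U a b * hodge g orient p U c d"

definition bracket :: "(pt \<Rightarrow> tens2) \<Rightarrow> pt \<Rightarrow> tens4 \<Rightarrow> tens2 \<Rightarrow> tens2" where
  "bracket g p P B a b = (\<Sum>c\<in>UNIV. \<Sum>d\<in>UNIV. \<Sum>m\<in>UNIV. \<Sum>n\<in>UNIV.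
       P a c b d * ginv g p c m * ginv g p d n * B m n)"

definition dot :: "(pt \<Rightarrow> tens2) \<Rightarrow> pt \<Rightarrow> tens2 \<Rightarrow> tens2 \<Rightarrow> tens2" where
  "dot g p T Q a b = (\<Sum>m\<in>UNIV. \<Sum>n\<in>UNIV. T a m * ginv g p m n * Q n b)"

definition trsq :: "(pt \<Rightarrow> tens2) \<Rightarrow> pt \<Rightarrow> tens2 \<Rightarrow> real" where
  "trsq g p B = (\<Sum>a\<in>UNIV. \<Sum>b\<in>UNIV. \<Sum>c\<in>UNIV. \<Sum>d\<in>UNIV.
       ginv g p a b * B b c * ginv g p c d * B d a)"

definition quad :: "tens2 \<Rightarrow> real^4 \<Rightarrow> real" where
  "quad B x = (\<Sum>a\<in>UNIV. \<Sum>b\<in>UNIV. B a b * x$a * x$b)"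

end

theory Submission
  imports Defs
begin

lemma UNIV4: "(UNIV::4 set) = {0,1,2,3}"
proof -
  have "x \<in> {0,1,2,3}" for x :: 4
    using exhaust_4[of x] by auto
  thus ?thesis by auto
qed
lemma sum4: "sum f (UNIV::4 set) = f 0 + f 1 + f 2 + f 3"
  unfolding UNIV4 by (simp add: add.assoc)

lemma det_blk:
  fixes A :: "real^4^4"
  assumes "A$0$2 = 0" "A$0$3 = 0" "A$1$2 = 0" "A$1$3 = 0"
     "A$2$0 = 0" "A$2$1 = 0" "A$3$0 = 0" "A$3$1 = 0"
  shows "det A = (A$0$0 * A$1$1 - A$0$1 * A$1$0) * (A$2$2 * A$3$3 - A$2$3 * A$3$2)"
proof -
  have f1: "finite {1::4, 2, 3}" "0 \<notin> {1::4, 2, 3}" by auto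
  have f2: "finite {2::4, 3}" "1 \<notin> {2::4, 3}" by auto
  have f3: "finite {3::4}" "2 \<notin> {3::4}" by auto
  show ?thesis
    unfolding det_def UNIV4
    unfolding sum_over_permutations_insert[OF f1]
    unfolding sum_over_permutations_insert[OF f2]
    unfolding sum_over_permutations_insert[OF f3]
    unfolding permutes_sing
    using assms
    by (simp add: sign_swap_id permutation_swap_id sign_compose sign_id swap_id_eq algebra_simps)
qed


lemma forall4: "(\<forall>i::4. P i) \<longleftrightarrow> P 0 \<and> P 1 \<and> P 2 \<and> P 3"
  by (metis UNIV4 UNIV_I insertE empty_iff)

definition dV :: "tens2 \<Rightarrow> real" where "dV G = G 0 0 * G 1 1 - G 0 1 * G 1 0"
definition dH :: "tens2 \<Rightarrow> real" where "dH G = G 2 2 * G 3 3 - G 2 3 * G 3 2"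
definition blk :: "tens2 \<Rightarrow> bool" where
  "blk G \<longleftrightarrow> G 0 2 = 0 \<and> G 0 3 = 0 \<and> G 1 2 = 0 \<and> G 1 3 = 0 \<and>
     G 2 0 = 0 \<and> G 2 1 = 0 \<and> G 3 0 = 0 \<and> G 3 1 = 0 \<and> G 1 0 = G 0 1 \<and> G 3 2 = G 2 3"
definition Ninv :: "tens2 \<Rightarrow> tens2" where
  "Ninv G a b = (if a=0\<and>b=0 then G 1 1/dV G else if a=0\<and>b=1 \<or> a=1\<and>b=0 then -G 0 1/dV G
     else if a=1\<and>b=1 then G 0 0/dV G else if a=2\<and>b=2 then G 3 3/dH G
     else if a=2\<and>b=3 \<or> a=3\<and>b=2 then -G 2 3/dH G else if a=3\<and>b=3 then G 2 2/dH G else 0)"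

lemma matrix_inv_eq:
  fixes A M :: "real^4^4"
  assumes "A ** M = mat 1" "M ** A = mat 1"
  shows "matrix_inv A = M"
proof -
  let ?P = "\<lambda>A'. A ** A' = mat 1 \<and> A' ** A = mat 1"
  have "?P (matrix_inv A)" unfolding matrix_inv_def by (rule someI[of ?P M]) (use assms in auto)
  then have "matrix_inv A = (matrix_inv A ** A) ** M"
    by (metis assms(1) matrix_mul_assoc matrix_mul_rid)
  also have "\<dots> = M" using \<open>?P (matrix_inv A)\<close> by (simp add: matrix_mul_lid)
  finally show ?thesis .
qed

lemma ginv_eq:
  assumes "blk (g p)" "dV (g p) \<noteq> 0" "dH (g p) \<noteq> 0"
  shows "ginv g p = Ninv (g p)"
proof -
  let ?M = "(\<chi> i j. Ninv (g p) i j) :: real^4^4"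
  have h1: "dV (g p) * dV (g p) \<noteq> 0" "dH (g p) * dH (g p) \<noteq> 0" using assms by auto
  have 1: "gmat g p ** ?M = mat 1" using assms h1
    unfolding vec_eq_iff matrix_matrix_mult_def mat_def gmat_def
    by (simp add: forall4 sum4 Ninv_def blk_def dV_def dH_def field_simps)
  have 2: "?M ** gmat g p = mat 1" using assms h1
    unfolding vec_eq_iff matrix_matrix_mult_def mat_def gmat_def
    by (simp add: forall4 sum4 Ninv_def blk_def dV_def dH_def field_simps)
  show ?thesis using matrix_inv_eq[OF 1 2] unfolding ginv_def[abs_def] by (simp add: fun_eq_iff)
qed



lemma dot_assoc: "dot g p (dot g p T Q) R = dot g p T (dot g p Q R)"
  unfolding dot_def[abs_def]
  by (simp add: fun_eq_iff sum_distrib_left sum_distrib_right mult.assoc sum4 algebra_simps)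

lemma U_struct:
  assumes blk: "blk (g p)" and dv: "dV (g p) < 0" and dh: "dH (g p) > 0" and h22: "g p 2 2 > 0"
    and anti: "\<forall>a b. U a b = - U b a"
    and sq: "\<forall>a b. dot g p U U a b = vpart g p a b"
    and unit: "(\<Sum>a\<in>UNIV. \<Sum>b\<in>UNIV. \<Sum>c\<in>UNIV. \<Sum>d\<in>UNIV.
                     U a b * ginv g p a c * ginv g p b d * U c d) = -2"
  shows "U = (\<lambda>a b. if a=0\<and>b=1 then U 0 1 else if a=1\<and>b=0 then - U 0 1 else 0)"
    and "(U 0 1)^2 = - dV (g p)"
proof -
  have N: "ginv g p = Ninv (g p)" using ginv_eq blk dv dh by auto
  have sqf: "dot g p U U = vpart g p" using sq by (simp add: fun_eq_iff)
  have "dot g p (dot g p U U) U = dot g p U (dot g p U U)" by (rule dot_assoc)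
  hence e: "dot g p (vpart g p) U = dot g p U (vpart g p)" by (simp add: sqf)
  have d0: "U a a = 0" for a using anti by (metis add.inverse_unique add_eq_0_iff2 equation_minus_iff
        minus_equation_iff neg_equal_zero)
  have cross: "U a b = 0" if "a \<in> {2,3}" "b \<in> {0,1}" for a b
  proof -
    have "dot g p (vpart g p) U a b = dot g p U (vpart g p) a b" using e by simp
    moreover have "dot g p (vpart g p) U a b = 0" using that
      by (auto simp: dot_def vpart_def)
    moreover have "dot g p U (vpart g p) a b = U a b" using that blk dv
      apply (auto simp: dot_def vpart_def sum4 N Ninv_def blk_def field_simps)
      apply (auto simp: dV_def algebra_simps)
      done
    ultimately show ?thesis by simp
  qed
  have c20: "U 2 0 = 0" "U 2 1 = 0" "U 3 0 = 0" "U 3 1 = 0" using cross by auto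
  have c02: "U 0 2 = 0" "U 1 2 = 0" "U 0 3 = 0" "U 1 3 = 0" using c20 anti by (metis neg_equal_0_iff_equal)+
  have "dot g p U U 2 2 = 0" using sq by (simp add: vpart_def)
  hence "U 2 3 * U 3 2 * g p 2 2 / dH (g p) = 0"
    using blk c20 c02 d0 apply (simp add: dot_def sum4 N Ninv_def blk_def) by blast
  hence u23: "U 2 3 = 0" using h22 dh anti[rule_format, of 3 2]
    by (metis divide_eq_0_iff mult_eq_0_iff neg_equal_0_iff_equal order_less_irrefl)
  have u32: "U 3 2 = 0" using u23 anti[rule_format, of 3 2] by simp
  have u10: "U 1 0 = - U 0 1" using anti[rule_format, of 1 0] by simp
  show Ueq: "U = (\<lambda>a b. if a=0\<and>b=1 then U 0 1 else if a=1\<and>b=0 then - U 0 1 else 0)"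
    using c20 c02 u23 u32 d0 u10 unfolding fun_eq_iff forall4 by auto
  define u where "u = U 0 1"
  have Uf: "U a b = (if a=0\<and>b=1 then u else if a=1\<and>b=0 then - u else 0)" for a b
    by (subst Ueq) (simp add: u_def)
  have "2 * u^2 / dV (g p) = -2"
  proof -
    have "(\<Sum>a\<in>UNIV. \<Sum>b\<in>UNIV. \<Sum>c\<in>UNIV. \<Sum>d\<in>UNIV.
                     U a b * ginv g p a c * ginv g p b d * U c d) = 
       2 * u^2 * (Ninv (g p) 0 0 * Ninv (g p) 1 1 - Ninv (g p) 0 1 * Ninv (g p) 1 0)"
      unfolding sum4 N Uf by (simp add: power2_eq_square algebra_simps)
    also have "Ninv (g p) 0 0 * Ninv (g p) 1 1 - Ninv (g p) 0 1 * Ninv (g p) 1 0 = 1 / dV (g p)"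
      using dv blk by (simp add: Ninv_def field_simps) (simp add: dV_def blk_def power2_eq_square algebra_simps)
    finally show ?thesis using unit by simp
  qed
  thus "(U 0 1)^2 = - dV (g p)" using dv by (simp add: field_simps u_def)
qed


lemma det4: "det (A::real^4^4) = A$0$0 * A$1$1 * A$2$2 * A$3$3 - A$0$0 * A$1$1 * A$2$3 * A$3$2 - A$0$0 * A$1$2 * A$2$1 * A$3$3 + A$0$0 * A$1$2 * A$2$3 * A$3$1 + A$0$0 * A$1$3 * A$2$1 * A$3$2 - A$0$0 * A$1$3 * A$2$2 * A$3$1 - A$0$1 * A$1$0 * A$2$2 * A$3$3 + A$0$1 * A$1$0 * A$2$3 * A$3$2 + A$0$1 * A$1$2 * A$2$0 * A$3$3 - A$0$1 * A$1$2 * A$2$3 * A$3$0 - A$0$1 * A$1$3 * A$2$0 * A$3$2 + A$0$1 * A$1$3 * A$2$2 * A$3$0 + A$0$2 * A$1$0 * A$2$1 * A$3$3 - A$0$2 * A$1$0 * A$2$3 * A$3$1 - A$0$2 * A$1$1 * A$2$0 * A$3$3 + A$0$2 * A$1$1 * A$2$3 * A$3$0 + A$0$2 * A$1$3 * A$2$0 * A$3$1 - A$0$2 * A$1$3 * A$2$1 * A$3$0 - A$0$3 * A$1$0 * A$2$1 * A$3$2 + A$0$3 * A$1$0 * A$2$2 * A$3$1 + A$0$3 * A$1$1 * A$2$0 * A$3$2 - A$0$3 * A$1$1 * A$2$2 * A$3$0 - A$0$3 * A$1$2 * A$2$0 * A$3$1 + A$0$3 * A$1$2 * A$2$1 * 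A$3$0"
proof -
  have f1: "finite {1::4, 2, 3}" "0 \<notin> {1::4, 2, 3}" by auto
  have f2: "finite {2::4, 3}" "1 \<notin> {2::4, 3}" by auto
  have f3: "finite {3::4}" "2 \<notin> {3::4}" by auto
  show ?thesis
    unfolding det_def UNIV4
    unfolding sum_over_permutations_insert[OF f1]
    unfolding sum_over_permutations_insert[OF f2]
    unfolding sum_over_permutations_insert[OF f3]
    unfolding permutes_sing
    by (simp add: sign_swap_id permutation_swap_id permutation_compose sign_compose sign_id swap_id_eq algebra_simps)
qed

lemma in4: "(a::4) = 0 \<or> a = 1 \<or> a = 2 \<or> a = 3"
  using UNIV4 by auto

lemma levi01: "levi a b 0 1 = (if a = 2 \<and> b = 3 then 1 else if a = 3 \<and> b = 2 then -1 else 0)"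
  using in4[of a] in4[of b]
  unfolding levi_def det4 by (auto simp: axis_def idx4_def)
lemma levi10: "levi a b 1 0 = (if a = 2 \<and> b = 3 then -1 else if a = 3 \<and> b = 2 then 1 else 0)"
  using in4[of a] in4[of b]
  unfolding levi_def det4 by (auto simp: axis_def idx4_def)


lemma levi00: "levi a b 0 0 = 0" and levi11: "levi a b 1 1 = 0"
  unfolding levi_def det4 by (auto simp: axis_def idx4_def)

lemma hodge_gen:
  fixes N U :: tens2
  assumes N: "ginv g p = N"
    and Nz: "N 0 2 = 0" "N 0 3 = 0" "N 1 2 = 0" "N 1 3 = 0" "N 2 0 = 0" "N 2 1 = 0" "N 3 0 = 0" "N 3 1 = 0"
    and Ns: "N 1 0 = N 0 1"
    and Uf: "\<And>a b. U a b = (if a=0\<and>b=1 then u else if a=1\<and>b=0 then - u else 0)"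
  shows "hodge g orient p U a b = (if a=2\<and>b=3 then orient * sqrt \<bar>det (gmat g p)\<bar> * u * (N 0 0 * N 1 1 - N 0 1 * N 0 1)
     else if a=3\<and>b=2 then - (orient * sqrt \<bar>det (gmat g p)\<bar> * u * (N 0 0 * N 1 1 - N 0 1 * N 0 1)) else 0)"
proof -
  have "hodge g orient p U a b = orient * sqrt \<bar>det (gmat g p)\<bar> * u * (N 0 0 * N 1 1 - N 0 1 * N 0 1)
     * (levi a b 0 1 - levi a b 1 0) / 2"
    unfolding hodge_def eta_def sum4 N Uf using Nz Ns
    by (simp add: levi00 levi11 algebra_simps)
  note h = this
  show ?thesis
  proof (cases "a=2 \<and> b=3")
    case True thus ?thesis using h by (simp add: levi01 levi10)
  next
    case F1: False
    show ?thesis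
    proof (cases "a=3 \<and> b=2")
      case True thus ?thesis using h by (simp add: levi01 levi10)
    next
      case False
      have "levi a b 0 1 = 0" "levi a b 1 0 = 0" using False F1 by (auto simp: levi01 levi10)
      hence "hodge g orient p U a b = 0" using h by simp
      thus ?thesis using False F1 by auto
    qed
  qed
qed



lemma br_all:
  fixes U W A G :: tens2
  assumes blk: "blk G" and dv: "dV G < 0" and dh: "dH G > 0"
    and Uf: "\<And>a b. U a b = (if a=0\<and>b=1 then u else if a=1\<and>b=0 then - u else 0)"
    and u2: "u * u = - dV G"
    and Wf: "\<And>a b. W a b = (if a=2\<and>b=3 then w else if a=3\<and>b=2 then - w else 0)"
    and w2: "w * w = dH G"
    and Rf: "\<And>a b. R a b = (if a\<in>{0,1}\<and>b\<in>{0,1} then A a b else 0) + mu * (if a\<in>{2,3}\<and>b\<in>{2,3} then G a b else 0)"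
    and As: "A 1 0 = A 0 1"
  shows "(\<Sum>c\<in>UNIV. \<Sum>d\<in>UNIV. \<Sum>m\<in>UNIV. \<Sum>n\<in>UNIV.
       (U a c * U b d - W a c * W b d) * Ninv G c m * Ninv G d n * R m n) =
      (if a\<in>{0,1}\<and>b\<in>{0,1} then A a b - (Ninv G 0 0 * A 0 0 + 2 * Ninv G 0 1 * A 0 1 + Ninv G 1 1 * A 1 1) * G a b else 0)
       - mu * (if a\<in>{2,3}\<and>b\<in>{2,3} then G a b else 0)"
proof -
  have dvn: "dV G \<noteq> 0" using dv by simp
  have dhn: "dH G \<noteq> 0" using dh by simp
  have dV: "dV G = G 0 0 * G 1 1 - G 0 1 * G 0 1" using blk by (simp add: dV_def blk_def)
  have dH: "dH G = G 2 2 * G 3 3 - G 2 3 * G 2 3" using blk by (simp add: dH_def blk_def)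
  have "\<forall>a b. (\<Sum>c\<in>UNIV. \<Sum>d\<in>UNIV. \<Sum>m\<in>UNIV. \<Sum>n\<in>UNIV.
       (U a c * U b d - W a c * W b d) * Ninv G c m * Ninv G d n * R m n) =
      (if a\<in>{0,1}\<and>b\<in>{0,1} then A a b - (Ninv G 0 0 * A 0 0 + 2 * Ninv G 0 1 * A 0 1 + Ninv G 1 1 * A 1 1) * G a b else 0)
       - mu * (if a\<in>{2,3}\<and>b\<in>{2,3} then G a b else 0)"
  unfolding forall4 sum4 Uf Wf Rf using blk As u2 w2 dV[symmetric] dH[symmetric]
  apply (intro conjI)
  apply (simp_all add: Ninv_def blk_def)
  apply (simp_all add: field_simps dvn dhn)
  apply algebra+
  done
  thus ?thesis by blast
qed



lemma A_struct:
  assumes blk: "blk (g p)" and dv: "dV (g p) < 0" and dh: "dH (g p) > 0"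
    and Ah: "\<forall>a b. dot g p A (hpart g p) a b = 0"
    and As: "\<forall>a b. A a b = A b a"
  shows "A a b = (if a\<in>{0,1}\<and>b\<in>{0,1} then A a b else 0)"
proof -
  have N: "ginv g p = Ninv (g p)" using ginv_eq blk dv dh by auto
  have z: "A c d = 0" if "d \<in> {2,3}" for c d
  proof -
    have "dot g p A (hpart g p) c d = A c d" using that blk dh
      apply (auto simp: dot_def hpart_def sum4 N Ninv_def blk_def field_simps)
      apply (auto simp: dH_def algebra_simps)
      done
    thus ?thesis using Ah by simp
  qed
  show ?thesis
  proof (cases "a\<in>{0,1}\<and>b\<in>{0,1}")
    case True thus ?thesis by simp
  next
    case False
    then have "b \<in> {2,3} \<or> a \<in> {2,3}" using in4[of a] in4[of b] by auto
    then show ?thesis using z[of b a] z[of a b] As False by auto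
  qed
qed

lemma point:
  fixes B :: tens2 and \<beta> mu :: real
  assumes blk: "blk (g p)" and dv: "dV (g p) < 0" and dh: "dH (g p) > 0" and g22: "g p 2 2 > 0"
    and hB: "\<forall>a b. B a b = \<beta> * (vpart g p a b - hpart g p a b)"
    and hb: "\<beta> = scal g p / 2 - 2 * mu"
  shows "(\<forall>a b. B a b = \<beta> * (vpart g p a b - hpart g p a b))
        \<and> mu = scal g p / 4 - \<beta> / 2
        \<and> ((\<forall>a b. B a b = 0) \<longrightarrow> \<beta> = 0)
        \<and> ((\<exists>a b. B a b \<noteq> 0) \<longrightarrow>
             (\<forall>x :: real^4. quad (g p) x = -1 \<longrightarrow>
                (let \<epsilon> = - quad B x / \<bar>quad B x\<bar> in \<beta> = \<epsilon> / 2 * sqrt (trsq g p B))))"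
proof (intro conjI impI allI)
  show "B a b = \<beta> * (vpart g p a b - hpart g p a b)" for a b using hB by simp
  show "mu = scal g p / 4 - \<beta> / 2" using hb by linarith
  assume "\<forall>a b. B a b = 0"
  hence "B 2 2 = 0" by simp
  hence "\<beta> * g p 2 2 = 0" using hB by (simp add: vpart_def hpart_def)
  thus "\<beta> = 0" using g22 by simp
next
  fix x :: "real^4"
  assume "\<exists>a b. B a b \<noteq> 0" and qx: "quad (g p) x = -1"
  then have bn: "\<beta> \<noteq> 0" using hB by auto
  let ?G = "g p"
  have dvn: "dV ?G \<noteq> 0" using dv by simp
  have dhn: "dH ?G \<noteq> 0" using dh by simp
  have dV: "dV ?G = ?G 0 0 * ?G 1 1 - ?G 0 1 * ?G 0 1" using blk by (simp add: dV_def blk_def)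
  have dH: "dH ?G = ?G 2 2 * ?G 3 3 - ?G 2 3 * ?G 2 3" using blk by (simp add: dH_def blk_def)
  have N: "ginv g p = Ninv (g p)" using ginv_eq blk dv dh by auto
  have Bf: "B a b = \<beta> * ((if a\<in>{0,1}\<and>b\<in>{0,1} then ?G a b else 0) - (if a\<in>{2,3}\<and>b\<in>{2,3} then ?G a b else 0))" for a b
    using hB by (simp add: vpart_def hpart_def)
  have tr: "trsq g p B = 4 * \<beta>^2"
    unfolding trsq_def sum4 N Bf using blk dV[symmetric] dH[symmetric]
    apply (simp add: Ninv_def blk_def)
    apply (simp add: field_simps dvn dhn power2_eq_square)
    apply algebra
    done
  have sq: "sqrt (trsq g p B) = 2 * \<bar>\<beta>\<bar>"
    unfolding tr by (simp add: real_sqrt_mult)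
  define qV where "qV = ?G 0 0 * x$0 * x$0 + 2 * ?G 0 1 * x$0 * x$1 + ?G 1 1 * x$1 * x$1"
  define qH where "qH = ?G 2 2 * x$2 * x$2 + 2 * ?G 2 3 * x$2 * x$3 + ?G 3 3 * x$3 * x$3"
  have qg: "quad ?G x = qV + qH" using blk
    unfolding quad_def sum4 qV_def qH_def by (simp add: blk_def algebra_simps)
  have qB: "quad B x = \<beta> * (qV - qH)" using blk
    unfolding quad_def sum4 qV_def qH_def Bf by (simp add: blk_def algebra_simps)
  have "?G 2 2 * qH = (?G 2 2 * x$2 + ?G 2 3 * x$3)^2 + dH ?G * (x$3)^2"
    unfolding qH_def dH by (simp add: power2_eq_square algebra_simps)
  also have "\<dots> \<ge> 0" using dh by (intro add_nonneg_nonneg) auto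
  finally have "qH \<ge> 0" using g22 by (simp add: zero_le_mult_iff)
  hence neg: "qV - qH < 0" using qg qx by linarith
  show "let \<epsilon> = - quad B x / \<bar>quad B x\<bar> in \<beta> = \<epsilon> / 2 * sqrt (trsq g p B)"
    unfolding Let_def sq qB
  proof (cases "\<beta> > 0")
    case True
    hence "\<beta> * (qV - qH) < 0" using neg by (simp add: mult_pos_neg)
    thus "\<beta> = - (\<beta> * (qV - qH)) / \<bar>\<beta> * (qV - qH)\<bar> / 2 * (2 * \<bar>\<beta>\<bar>)"
      using True neg by simp
  next
    case False
    hence "\<beta> < 0" using bn by simp
    hence "\<beta> * (qV - qH) > 0" using neg by (simp add: mult_neg_neg)
    thus "\<beta> = - (\<beta> * (qV - qH)) / \<bar>\<beta> * (qV - qH)\<bar> / 2 * (2 * \<bar>\<beta>\<bar>)"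
      using \<open>\<beta> < 0\<close> neg by simp
  qed
qed



theorem mainTheorem10:
  fixes \<Omega> :: "(real^4) set" and g :: "real^4 \<Rightarrow> 4 \<Rightarrow> 4 \<Rightarrow> real"
    and orient :: real and U A :: "real^4 \<Rightarrow> 4 \<Rightarrow> 4 \<Rightarrow> real"
    and \<rho> \<mu> :: "real^4 \<Rightarrow> real"
  assumes warped: "s_warped \<Omega> g"
    and orient: "orient = 1 \<or> orient = -1"
    and U_form: "\<forall>p\<in>\<Omega>. \<forall>a b. U p a b = - U p b a"
    and U_sq: "\<forall>p\<in>\<Omega>. \<forall>a b. dot g p (U p) (U p) a b = vpart g p a b"
    and U_unit: "\<forall>p\<in>\<Omega>. (\<Sum>a\<in>UNIV. \<Sum>b\<in>UNIV. \<Sum>c\<in>UNIV. \<Sum>d\<in>UNIV.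
                     U p a b * ginv g p a c * ginv g p b d * U p c d) = -2"
    and Weyl: "\<forall>p\<in>\<Omega>. \<forall>a b c d. weyl g p a b c d
                  = \<rho> p * (3 * Stens g orient p (U p) a b c d + Gt g p a b c d)"
    and A_sym: "\<forall>p\<in>\<Omega>. \<forall>a b. A p a b = A p b a"
    and A_h: "\<forall>p\<in>\<Omega>. \<forall>a b. dot g p (A p) (hpart g p) a b = 0"
    and Ric: "\<forall>p\<in>\<Omega>. \<forall>a b. ricci g p a b = A p a b + \<mu> p * hpart g p a b"
  shows "\<forall>p\<in>\<Omega>.
    (let B = (\<lambda>a b. ricci g p a b - bracket g p (Stens g orient p (U p)) (ricci g p) a b
                     - scal g p / 2 * g p a b);
         \<beta> = scal g p / 2 - 2 * \<mu> p
     in (\<forall>a b. B a b = \<beta> * (vpart g p a b - hpart g p a b))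
        \<and> \<mu> p = scal g p / 4 - \<beta> / 2
        \<and> ((\<forall>a b. B a b = 0) \<longrightarrow> \<beta> = 0)
        \<and> ((\<exists>a b. B a b \<noteq> 0) \<longrightarrow>
             (\<forall>x :: real^4. quad (g p) x = -1 \<longrightarrow>
                (let \<epsilon> = - quad B x / \<bar>quad B x\<bar> in \<beta> = \<epsilon> / 2 * sqrt (trsq g p B)))))"
proof
  fix p assume pO: "p \<in> \<Omega>"
  obtain lam vv hh where W: "\<forall>p\<in>\<Omega>.
        (\<forall>i j. g p i j =
            (if i \<in> {0,1} \<and> j \<in> {0,1} then vv (p$0) (p$1) i j
             else if i \<in> {2,3} \<and> j \<in> {2,3} then exp (2 * lam (p$0) (p$1)) * hh (p$2) (p$3) i j
             else 0)) \<and>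
        vv (p$0) (p$1) 0 1 = vv (p$0) (p$1) 1 0 \<and>
        vv (p$0) (p$1) 0 0 * vv (p$0) (p$1) 1 1 - vv (p$0) (p$1) 0 1 * vv (p$0) (p$1) 1 0 < 0 \<and>
        hh (p$2) (p$3) 2 3 = hh (p$2) (p$3) 3 2 \<and>
        hh (p$2) (p$3) 2 2 > 0 \<and>
        hh (p$2) (p$3) 2 2 * hh (p$2) (p$3) 3 3 - hh (p$2) (p$3) 2 3 * hh (p$2) (p$3) 3 2 > 0"
    using warped unfolding s_warped_def by blast
  define V where "V = vv (p$0) (p$1)"
  define H where "H = hh (p$2) (p$3)"
  define e where "e = exp (2 * lam (p$0) (p$1))"
  have Wp: "(\<forall>i j. g p i j = (if i \<in> {0,1} \<and> j \<in> {0,1} then V i j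
             else if i \<in> {2,3} \<and> j \<in> {2,3} then e * H i j else 0))"
     "V 0 1 = V 1 0" "V 0 0 * V 1 1 - V 0 1 * V 1 0 < 0"
     "H 2 3 = H 3 2" "H 2 2 > 0" "H 2 2 * H 3 3 - H 2 3 * H 3 2 > 0"
    using W pO unfolding V_def H_def e_def by auto
  have e0: "e > 0" unfolding e_def by simp
  have gp: "g p i j = (if i \<in> {0,1} \<and> j \<in> {0,1} then V i j
             else if i \<in> {2,3} \<and> j \<in> {2,3} then e * H i j else 0)" for i j
    using Wp(1) by blast
  have blk: "blk (g p)" unfolding blk_def gp using Wp by simp
  have dv: "dV (g p) < 0" unfolding dV_def gp using Wp by simp
  have dHe: "dH (g p) = e * e * (H 2 2 * H 3 3 - H 2 3 * H 3 2)"
    unfolding dH_def gp by (simp add: algebra_simps)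
  have dh: "dH (g p) > 0" unfolding dHe using Wp e0 by simp
  have g22: "g p 2 2 > 0" unfolding gp using Wp e0 by simp
  have dvn: "dV (g p) \<noteq> 0" using dv by simp
  have N: "ginv g p = Ninv (g p)" using ginv_eq blk dv dh by auto
  have US: "U p = (\<lambda>a b. if a=0\<and>b=1 then U p 0 1 else if a=1\<and>b=0 then - U p 0 1 else 0)"
           "(U p 0 1)^2 = - dV (g p)"
  proof -
    have anti: "\<forall>a b. U p a b = - U p b a" using U_form pO by blast
    have sq: "\<forall>a b. dot g p (U p) (U p) a b = vpart g p a b" using U_sq pO by blast
    have un: "(\<Sum>a\<in>UNIV. \<Sum>b\<in>UNIV. \<Sum>c\<in>UNIV. \<Sum>d\<in>UNIV.
                     U p a b * ginv g p a c * ginv g p b d * U p c d) = -2" using U_unit pO by blast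
    show "U p = (\<lambda>a b. if a=0\<and>b=1 then U p 0 1 else if a=1\<and>b=0 then - U p 0 1 else 0)"
           "(U p 0 1)^2 = - dV (g p)"
      using U_struct[where g=g and p=p and U="U p", OF blk dv dh g22 anti sq un] by auto
  qed
  define u where "u = U p 0 1"
  have Uf: "U p a b = (if a=0\<and>b=1 then u else if a=1\<and>b=0 then - u else 0)" for a b
    by (subst US(1)) (simp add: u_def)
  have u2: "u * u = - dV (g p)" using US(2) unfolding u_def by (simp add: power2_eq_square)
  define k where "k = Ninv (g p) 0 0 * Ninv (g p) 1 1 - Ninv (g p) 0 1 * Ninv (g p) 0 1"
  define w where "w = orient * sqrt \<bar>det (gmat g p)\<bar> * u * k"
  have Wf: "hodge g orient p (U p) a b = (if a=2\<and>b=3 then w else if a=3\<and>b=2 then - w else 0)" for a b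
    unfolding w_def k_def
    by (rule hodge_gen[OF N]) (simp_all add: Ninv_def Uf)
  have kv: "k = 1 / dV (g p)" unfolding k_def using dv blk
    by (simp add: Ninv_def field_simps) (simp add: dV_def blk_def power2_eq_square algebra_simps)
  have det: "det (gmat g p) = dV (g p) * dH (g p)"
    using blk by (subst det_blk) (simp_all add: gmat_def blk_def dV_def dH_def)
  have absd: "\<bar>det (gmat g p)\<bar> = - dV (g p) * dH (g p)" unfolding det using dv dh
    by (simp add: abs_if mult_neg_pos)
  have o2: "orient * orient = 1" using orient by auto
  have sq2: "(sqrt \<bar>det (gmat g p)\<bar>)^2 = - dV (g p) * dH (g p)" using absd by simp
  have "w * w = (orient * orient) * (sqrt \<bar>det (gmat g p)\<bar>)^2 * (u * u) * (k * k)"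
    unfolding w_def by (simp add: power2_eq_square algebra_simps)
  also have "\<dots> = dH (g p)" unfolding o2 sq2 u2 kv using dv dh
    by (simp add: field_simps)
  finally have w2: "w * w = dH (g p)" .
  have Ab: "A p a b = (if a\<in>{0,1}\<and>b\<in>{0,1} then A p a b else 0)" for a b
  proof -
    have "\<forall>a b. dot g p (A p) (hpart g p) a b = 0" using A_h pO by blast
    moreover have "\<forall>a b. A p a b = A p b a" using A_sym pO by blast
    ultimately show ?thesis using A_struct[where g=g and p=p and A="A p", OF blk dv dh] by blast
  qed
  have Rf: "ricci g p a b = (if a\<in>{0,1}\<and>b\<in>{0,1} then A p a b else 0)
        + \<mu> p * (if a\<in>{2,3}\<and>b\<in>{2,3} then g p a b else 0)" for a b
    using Ric pO Ab[of a b] by (simp add: hpart_def)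
  have As: "A p 1 0 = A p 0 1" using A_sym pO by auto
  define t where "t = Ninv (g p) 0 0 * A p 0 0 + 2 * Ninv (g p) 0 1 * A p 0 1 + Ninv (g p) 1 1 * A p 1 1"
  have br: "bracket g p (Stens g orient p (U p)) (ricci g p) a b =
      (if a\<in>{0,1}\<and>b\<in>{0,1} then A p a b - t * g p a b else 0)
       - \<mu> p * (if a\<in>{2,3}\<and>b\<in>{2,3} then g p a b else 0)" for a b
    unfolding bracket_def Stens_def N t_def
    by (rule br_all[OF blk dv dh Uf u2 Wf w2 Rf As])
  have dhn: "dH (g p) \<noteq> 0" using dh by simp
  have dV: "dV (g p) = g p 0 0 * g p 1 1 - g p 0 1 * g p 0 1" using blk by (simp add: dV_def blk_def)
  have dH: "dH (g p) = g p 2 2 * g p 3 3 - g p 2 3 * g p 2 3" using blk by (simp add: dH_def blk_def)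
  have sc: "scal g p = t + 2 * \<mu> p"
    unfolding scal_def sum4 N Rf t_def using blk As dV[symmetric] dH[symmetric]
    apply (simp add: Ninv_def blk_def)
    apply (simp add: field_simps dvn dhn)
    done
  let ?B = "\<lambda>a b. ricci g p a b - bracket g p (Stens g orient p (U p)) (ricci g p) a b
                     - scal g p / 2 * g p a b"
  have hB: "\<forall>a b. ?B a b = (scal g p / 2 - 2 * \<mu> p) * (vpart g p a b - hpart g p a b)"
    unfolding forall4 br Rf sc vpart_def hpart_def using blk
    by (simp add: blk_def algebra_simps)
  have P: "let B = ?B; \<beta> = scal g p / 2 - 2 * \<mu> p
     in (\<forall>a b. B a b = \<beta> * (vpart g p a b - hpart g p a b))
        \<and> \<mu> p = scal g p / 4 - \<beta> / 2
        \<and> ((\<forall>a b. B a b = 0) \<longrightarrow> \<beta> = 0)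
        \<and> ((\<exists>a b. B a b \<noteq> 0) \<longrightarrow>
             (\<forall>x :: real^4. quad (g p) x = -1 \<longrightarrow>
                (let \<epsilon> = - quad B x / \<bar>quad B x\<bar> in \<beta> = \<epsilon> / 2 * sqrt (trsq g p B))))"
    unfolding Let_def[of ?B] Let_def[of "scal g p / 2 - 2 * \<mu> p"]
    by (rule point[where g=g and p=p, OF blk dv dh g22 hB refl])
  show "let B = ?B; \<beta> = scal g p / 2 - 2 * \<mu> p
     in (\<forall>a b. B a b = \<beta> * (vpart g p a b - hpart g p a b))
        \<and> \<mu> p = scal g p / 4 - \<beta> / 2
        \<and> ((\<forall>a b. B a b = 0) \<longrightarrow> \<beta> = 0)
        \<and> ((\<exists>a b. B a b \<noteq> 0) \<longrightarrow>
             (\<forall>x :: real^4. quad (g p) x = -1 \<longrightarrow>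
                (let \<epsilon> = - quad B x / \<bar>quad B x\<bar> in \<beta> = \<epsilon> / 2 * sqrt (trsq g p B))))"
    by (rule P)
qed

end
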